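(* Let a total cost $N_{tot}\in\mathbb{N}$ be fixed. Under the assumption stated in the context (independent Monte-Carlo estimators $\widehat W_u=\frac1{N_u}\sum_{n=1}^{N_u}\widehat W_u^{(n)}$ of cost $\kappa N_u$), if the Shapley effects are estimated with the subset $W$-aggregation procedure, the solution of the relaxed program $$\min_{(N_u)_{\emptyset\subsetneq u\subsetneq[1:p]}\in(0,+\infty)^{2^p-2}}\sum_{i=1}^p\mathrm{Var}(\widehat\eta_i)\quad\text{subject to}\quad\kappa\sum_{\emptyset\subsetneq u\subsetneq[1:p]}N_u=N_{tot}$$ is $(N_u^* )_{\emptyset\subsetneq u\subsetneq[1:p]}$ with, for all $\emptyset\subsetneq u\subsetneq[1:p]$, $$N_u^*=\frac{N_{tot}}{\kappa}\,\frac{\sqrt{(p-|u|)!\,|u|!\,(p-|u|-1)!\,(|u|-1)!\,\mathrm{Var}(\widehat W_u^{(1)})}}{\sum_{\emptyset\subsetneq v\subsetneq[1:p]}\sqrt{(p-|v|)!\,|v|!\,(p-|v|-1)!\,(|v|-1)!\,\mathrm{Var}(\widehat W_v^{(1)})}}.$$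
   Context: Setting: $\mathbf{X}=(X_1,\dots,X_p)$, $Y=f(\mathbf{X})$ with $f\in L^2(\mathbb{P}_\mathbf{X})$. For $u\subset[1:p]$, $W_u$ denotes either $V_u=\mathrm{Var}(\mathrm{E}(Y|\mathbf{X}_u))$ for all $u$ or $E_u=\mathrm{E}(\mathrm{Var}(Y|\mathbf{X}_{-u}))$ for all $u$, with $-u=[1:p]\setminus u$; $W_\emptyset=0$, $W_{[1:p]}=\mathrm{Var}(Y)$ are taken as known. The Shapley effects are $\eta_i=\frac{1}{p\mathrm{Var}(Y)}\sum_{u\subset -i}\binom{p-1}{|u|}^{-1}(W_{u\cup\{i\}}-W_u)$. Assumption: for all $\emptyset\subsetneq u\subsetneq[1:p]$, $\widehat W_u$ is computed with cost $\kappa N_u$ (number of evaluations of $f$) as $\widehat W_u=\frac1{N_u}\sum_{n=1}^{N_u}\widehat W_u^{(n)}$ with $(\widehat W_u^{(n)})_n$ i.i.d., and the $(\widehat W_u)_u$ are independent; $\kappa\in\mathbb{N}^*$. Subset $W$-aggregation procedure: compute $\widehat W_u$ once for every $u$ (with $\widehat W_\emptyset=0$, $\widehat W_{[1:p]}=\mathrm{Var}(Y)$) and set $\widehat\eta_i=\frac{1}{p\mathrm{Var}(Y)}\sum_{u\subset -i}\binom{p-1}{|u|}^{-1}(\widehat W_{u\cup\{i\}}-\widehat W_u)$ for all $i$. *)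

theory Defs
  imports Complex_Main
begin

definition proper_subsets :: "nat \<Rightarrow> nat set set" where
  "proper_subsets p = {u. u \<subseteq> {1..p} \<and> u \<noteq> {} \<and> u \<noteq> {1..p}}"

text \<open>Subset W-aggregation procedure: given the (estimated) values What u for all
  subsets u, the estimate of the i-th Shapley effect.  VY is Var(Y).\<close>

definition shapley_W_aggregation :: "nat \<Rightarrow> real \<Rightarrow> (nat set \<Rightarrow> real) \<Rightarrow> nat \<Rightarrow> real" where
  "shapley_W_aggregation p VY What i =
     1 / (real p * VY) *
     (\<Sum>u\<in>Pow ({1..p} - {i}).
        (1 / real ((p - 1) choose card u)) * (What (insert i u) - What u))"

text \<open>The estimator is an affine function of
  the independent estimators What u (u proper nonempty) -- What {} = 0 and
  What [1:p] = Var(Y) being deterministic -- and Var(What u) = sigma u / N u, where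
  sigma u = Var(What_u^(1)).  Hence the variance of eta_i is the sum of the squared
  coefficients (obtained by evaluating the linear part on indicator vectors)
  times the variances.  This formula also defines the relaxed objective for real N u.\<close>

definition var_eta_hat ::
  "nat \<Rightarrow> real \<Rightarrow> (nat set \<Rightarrow> real) \<Rightarrow> (nat set \<Rightarrow> real) \<Rightarrow> nat \<Rightarrow> real" where
  "var_eta_hat p VY sigma N i =
     (\<Sum>u\<in>proper_subsets p.
        (shapley_W_aggregation p VY (\<lambda>v. if v = u then 1 else 0) i)\<^sup>2 * (sigma u / N u))"

definition total_var_eta_hat ::
  "nat \<Rightarrow> real \<Rightarrow> (nat set \<Rightarrow> real) \<Rightarrow> (nat set \<Rightarrow> real) \<Rightarrow> real" where
  "total_var_eta_hat p VY sigma N = (\<Sum>i\<in>{1..p}. var_eta_hat p VY sigma N i)"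

definition feasible_alloc :: "nat \<Rightarrow> nat \<Rightarrow> nat \<Rightarrow> (nat set \<Rightarrow> real) \<Rightarrow> bool" where
  "feasible_alloc p \<kappa> Ntot N \<longleftrightarrow>
     (\<forall>u\<in>proper_subsets p. 0 < N u) \<and>
     real \<kappa> * (\<Sum>u\<in>proper_subsets p. N u) = real Ntot"

definition opt_weight :: "nat \<Rightarrow> (nat set \<Rightarrow> real) \<Rightarrow> nat set \<Rightarrow> real" where
  "opt_weight p sigma u =
     sqrt (fact (p - card u) * fact (card u) * fact (p - card u - 1) * fact (card u - 1) * sigma u)"

definition N_opt :: "nat \<Rightarrow> nat \<Rightarrow> nat \<Rightarrow> (nat set \<Rightarrow> real) \<Rightarrow> nat set \<Rightarrow> real" where
  "N_opt p \<kappa> Ntot sigma u =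
     real Ntot / real \<kappa> *
     (opt_weight p sigma u / (\<Sum>v\<in>proper_subsets p. opt_weight p sigma v))"

end

theory Submission
  imports Defs
begin

lemma coef:
  assumes u: "u \<in> proper_subsets p" and i: "i \<in> {1..p}"
  shows "shapley_W_aggregation p VY (\<lambda>v. if v = u then 1 else 0) i =
    1 / (real p * VY) * (if i \<in> u then 1 / real ((p - 1) choose (card u - 1))
                         else - (1 / real ((p - 1) choose card u)))"
proof -
  have uP: "u \<subseteq> {1..p}" using u by (simp add: proper_subsets_def)
  have fin: "finite (Pow ({1..p} - {i}))" by simp
  show ?thesis
  proof (cases "i \<in> u")
    case True
    have "(\<Sum>v\<in>Pow ({1..p} - {i}).
        (1 / real ((p - 1) choose card v)) * ((if insert i v = u then 1 else 0) - (if v = u then 1 else 0)))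
      = (\<Sum>v\<in>Pow ({1..p} - {i}). if v = u - {i} then 1 / real ((p - 1) choose card v) else 0)"
    proof (rule sum.cong)
      fix v assume v: "v \<in> Pow ({1..p} - {i})"
      then have "i \<notin> v" by auto
      then have "(insert i v = u) = (v = u - {i})" using True by auto
      moreover have "v \<noteq> u" using \<open>i \<notin> v\<close> True by auto
      ultimately show "(1 / real ((p - 1) choose card v)) * ((if insert i v = u then 1 else 0) - (if v = u then 1 else 0))
         = (if v = u - {i} then 1 / real ((p - 1) choose card v) else 0)" by simp
    qed simp
    also have "\<dots> = 1 / real ((p - 1) choose card (u - {i}))"
      using uP by (subst sum.delta[OF fin]) auto
    also have "card (u - {i}) = card u - 1"
      using True uP finite_subset by (simp add: card_Diff_singleton)
    finally show ?thesis using True by (simp add: shapley_W_aggregation_def)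
  next
    case False
    have "(\<Sum>v\<in>Pow ({1..p} - {i}).
        (1 / real ((p - 1) choose card v)) * ((if insert i v = u then 1 else 0) - (if v = u then 1 else 0)))
      = (\<Sum>v\<in>Pow ({1..p} - {i}). if v = u then - (1 / real ((p - 1) choose card v)) else 0)"
    proof (rule sum.cong)
      fix v assume v: "v \<in> Pow ({1..p} - {i})"
      have "insert i v \<noteq> u" using False by auto
      then show "(1 / real ((p - 1) choose card v)) * ((if insert i v = u then 1 else 0) - (if v = u then 1 else 0))
         = (if v = u then - (1 / real ((p - 1) choose card v)) else 0)" by simp
    qed simp
    also have "\<dots> = - (1 / real ((p - 1) choose card u))"
      using uP False by (subst sum.delta[OF fin]) auto
    finally show ?thesis using False by (simp add: shapley_W_aggregation_def)
  qed
qed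

lemma alg: fixes F a b J M :: real assumes "F \<noteq> 0" "a \<noteq> 0" "b \<noteq> 0"
  shows "J * (1 / (F / (a * (M*b))))^2 + M * (1 / (F / ((J*a) * b)))^2 = (J+M) / F^2 * ((M*b) * (J*a) * b * a)"
  using assms by (simp add: field_simps power2_eq_square)

lemma fid:
  fixes j m :: nat
  shows "real (j+1) * (1 / real ((j+m+1) choose j))^2 + real (m+1) * (1 / real ((j+m+1) choose (j+1)))^2
    = real (j+m+2) / (fact (j+m+1))^2 * (fact (m+1) * fact (j+1) * fact m * fact j)"
proof -
  have c1: "real ((j+m+1) choose j) = fact (j+m+1) / (fact j * fact (m+1))"
    by (subst binomial_fact) (auto simp: add.commute add.left_commute)
  have c2: "real ((j+m+1) choose (j+1)) = fact (j+m+1) / (fact (j+1) * fact m)"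
    by (subst binomial_fact) auto
  have f1: "(fact (j+1)::real) = real (j+1) * fact j" by simp
  have f2: "(fact (m+1)::real) = real (m+1) * fact m" by simp
  have e: "real (j+m+2) = real (j+1) + real (m+1)" by simp
  show ?thesis unfolding c1 c2 f1 f2 e
    by (rule alg) auto
qed

lemma card_bounds:
  assumes u: "u \<in> proper_subsets p"
  shows "1 \<le> card u" "card u < p" "finite u" "u \<subseteq> {1..p}"
proof -
  have uP: "u \<subseteq> {1..p}" "u \<noteq> {}" "u \<noteq> {1..p}" using u by (auto simp: proper_subsets_def)
  show fu: "finite u" using uP finite_subset by blast
  show "1 \<le> card u" using fu uP by (simp add: Suc_leI card_gt_0_iff)
  have "u \<subset> {1..p}" using uP by auto
  then have "card u < card {1..p}" by (rule psubset_card_mono[rotated]) simp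
  then show "card u < p" by simp
  show "u \<subseteq> {1..p}" by (fact uP(1))
qed

lemma weight:
  assumes u: "u \<in> proper_subsets p"
  shows "real (card u) * (1 / real ((p - 1) choose (card u - 1)))^2
       + real (p - card u) * (1 / real ((p - 1) choose card u))^2
     = real p / (fact (p - 1))^2 * (fact (p - card u) * fact (card u) * fact (p - card u - 1) * fact (card u - 1))"
proof -
  note cb = card_bounds[OF u]
  obtain j where j: "card u = j + 1" using cb(1) by (metis add.commute le_Suc_ex)
  obtain m where m: "p = j + m + 2" using cb(2) j by (metis add.commute add_Suc_right le_Suc_ex less_eq_Suc_le add_2_eq_Suc' Suc_eq_plus1)
  have "p - 1 = j + m + 1" "card u - 1 = j" "p - card u = m + 1" "p - card u - 1 = m" using j m by auto
  then show ?thesis using fid[of j m] j m by (simp add: mult.commute mult.left_commute mult.assoc)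
qed

lemma csum:
  assumes u: "u \<in> proper_subsets p"
  shows "(\<Sum>i\<in>{1..p}. (shapley_W_aggregation p VY (\<lambda>v. if v = u then 1 else 0) i)^2)
     = (1 / (real p * VY))^2 * (real p / (fact (p - 1))^2 *
        (fact (p - card u) * fact (card u) * fact (p - card u - 1) * fact (card u - 1)))"
proof -
  note cb = card_bounds[OF u]
  define a where "a = 1 / real ((p - 1) choose (card u - 1))"
  define b where "b = 1 / real ((p - 1) choose card u)"
  have "(\<Sum>i\<in>{1..p}. (shapley_W_aggregation p VY (\<lambda>v. if v = u then 1 else 0) i)^2)
      = (\<Sum>i\<in>{1..p}. (1 / (real p * VY))^2 * (if i \<in> u then a^2 else b^2))"
  proof (rule sum.cong)
    fix i assume i: "i \<in> {1..p}"
    show "(shapley_W_aggregation p VY (\<lambda>v. if v = u then 1 else 0) i)^2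
      = (1 / (real p * VY))^2 * (if i \<in> u then a^2 else b^2)"
      unfolding coef[OF u i] a_def[symmetric] b_def[symmetric] by (simp add: power_mult_distrib power_divide)
  qed simp
  also have "\<dots> = (1 / (real p * VY))^2 * (\<Sum>i\<in>{1..p}. (if i \<in> u then a^2 else b^2))"
    by (simp add: sum_distrib_left)
  also have "(\<Sum>i\<in>{1..p}. (if i \<in> u then a^2 else b^2)) = real (card u) * a^2 + real (p - card u) * b^2"
  proof -
    have i1: "{1..p} \<inter> {i. i \<in> u} = u" using cb(4) by auto
    have i2: "{1..p} \<inter> - {i. i \<in> u} = {1..p} - u" by auto
    have "card ({1..p} - u) = p - card u" using cb(4) cb(3) by (simp add: card_Diff_subset)
    moreover have "{1..p} \<inter> u = u" using cb(4) by auto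
    moreover have "{1..p} \<inter> - u = {1..p} - u" by auto
    ultimately show ?thesis by (simp add: sum.If_cases)
  qed
  also have "\<dots> = real p / (fact (p - 1))^2 * (fact (p - card u) * fact (card u) * fact (p - card u - 1) * fact (card u - 1))"
    unfolding a_def b_def by (rule weight[OF u])
  finally show ?thesis .
qed

lemma total:
  assumes sig: "\<forall>u\<in>proper_subsets p. 0 < sigma u"
  shows "total_var_eta_hat p VY sigma N =
     (1 / (real p * VY))^2 * (real p / (fact (p - 1))^2) * (\<Sum>u\<in>proper_subsets p. (opt_weight p sigma u)^2 / N u)"
proof -
  have "total_var_eta_hat p VY sigma N = (\<Sum>u\<in>proper_subsets p. \<Sum>i\<in>{1..p}.
      (shapley_W_aggregation p VY (\<lambda>v. if v = u then 1 else 0) i)\<^sup>2 * (sigma u / N u))"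
    unfolding total_var_eta_hat_def var_eta_hat_def by (rule sum.swap)
  also have "\<dots> = (\<Sum>u\<in>proper_subsets p. (1 / (real p * VY))^2 * (real p / (fact (p - 1))^2) * ((opt_weight p sigma u)^2 / N u))"
  proof (rule sum.cong)
    fix u assume u: "u \<in> proper_subsets p"
    have w2: "(opt_weight p sigma u)^2 = fact (p - card u) * fact (card u) * fact (p - card u - 1) * fact (card u - 1) * sigma u"
      unfolding opt_weight_def using sig u by (intro real_sqrt_pow2) auto
    show "(\<Sum>i\<in>{1..p}. (shapley_W_aggregation p VY (\<lambda>v. if v = u then 1 else 0) i)\<^sup>2 * (sigma u / N u))
       = (1 / (real p * VY))^2 * (real p / (fact (p - 1))^2) * ((opt_weight p sigma u)^2 / N u)"
      unfolding sum_distrib_right[symmetric] csum[OF u] w2 by simp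
  qed simp
  also have "\<dots> = (1 / (real p * VY))^2 * (real p / (fact (p - 1))^2) * (\<Sum>u\<in>proper_subsets p. (opt_weight p sigma u)^2 / N u)"
    by (simp add: sum_distrib_left)
  finally show ?thesis .
qed

lemma opt_ineq:
  fixes A :: "'a set" and w N :: "'a \<Rightarrow> real" and S :: real
  assumes fin: "finite A" and w: "\<forall>u\<in>A. 0 < w u" and S: "0 < S"
    and N: "\<forall>u\<in>A. 0 < N u" and sN: "sum N A = S"
  shows "(sum w A)^2 / S \<le> (\<Sum>u\<in>A. (w u)^2 / N u)"
    and "(\<Sum>u\<in>A. (w u)^2 / N u) \<le> (sum w A)^2 / S \<Longrightarrow> \<forall>u\<in>A. N u = S * w u / sum w A"
proof -
  define W where "W = sum w A"
  define t where "t = W / S"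
  have key: "(\<Sum>u\<in>A. (w u)^2 / N u) - W^2 / S = (\<Sum>u\<in>A. (w u - t * N u)^2 / N u)"
  proof -
    have "\<And>u. u \<in> A \<Longrightarrow> (w u - t * N u)^2 / N u = (w u)^2 / N u - 2 * t * w u + t^2 * N u"
    proof -
      fix u assume "u \<in> A"
      then have "N u \<noteq> 0" using N by auto
      then show "(w u - t * N u)^2 / N u = (w u)^2 / N u - 2 * t * w u + t^2 * N u"
        by (simp add: power2_eq_square diff_divide_distrib add_divide_distrib algebra_simps)
    qed
    then have "(\<Sum>u\<in>A. (w u - t * N u)^2 / N u) = (\<Sum>u\<in>A. (w u)^2 / N u) + (t^2 * S - 2 * t * W)"
    proof -
      have "(\<Sum>u\<in>A. (w u - t * N u)^2 / N u) = (\<Sum>u\<in>A. (w u)^2 / N u - 2 * t * w u + t^2 * N u)"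
        by (rule sum.cong) (simp_all add: \<open>\<And>u. u \<in> A \<Longrightarrow> _\<close>)
      also have "\<dots> = (\<Sum>u\<in>A. (w u)^2 / N u) - (\<Sum>u\<in>A. 2 * t * w u) + (\<Sum>u\<in>A. t^2 * N u)"
        by (simp only: sum.distrib sum_subtractf)
      also have "(\<Sum>u\<in>A. 2 * t * w u) = 2 * t * W" by (simp only: W_def sum_distrib_left)
      also have "(\<Sum>u\<in>A. t^2 * N u) = t^2 * S" by (simp only: sN[symmetric] sum_distrib_left)
      finally show ?thesis by simp
    qed
    also have "t^2 * S - 2 * t * W = - (W^2 / S)" using S by (simp add: t_def field_simps power2_eq_square)
    finally show ?thesis by simp
  qed
  have nn: "\<forall>u\<in>A. 0 \<le> (w u - t * N u)^2 / N u" using N by auto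
  show "(sum w A)^2 / S \<le> (\<Sum>u\<in>A. (w u)^2 / N u)"
    using key sum_nonneg[of A "\<lambda>u. (w u - t * N u)^2 / N u"] nn W_def by auto
  assume le: "(\<Sum>u\<in>A. (w u)^2 / N u) \<le> (sum w A)^2 / S"
  have "(\<Sum>u\<in>A. (w u - t * N u)^2 / N u) = 0"
    using key le nn sum_nonneg[of A "\<lambda>u. (w u - t * N u)^2 / N u"] W_def by auto
  then have z: "\<forall>u\<in>A. (w u - t * N u)^2 / N u = 0"
    using sum_nonneg_eq_0_iff[OF fin, of "\<lambda>u. (w u - t * N u)^2 / N u"] nn by simp
  show "\<forall>u\<in>A. N u = S * w u / sum w A"
  proof
    fix u assume u: "u \<in> A"
    have "(w u - t * N u)^2 / N u = 0" using z u by blast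
    moreover have "N u \<noteq> 0" using N u by auto
    ultimately have "(w u - t * N u)^2 = 0" by simp
    then have "w u = t * N u" by simp
    moreover have "W > 0"
    proof -
      have "w u \<le> W" unfolding W_def using fin u w by (intro member_le_sum) auto
      then show ?thesis using w u by auto
    qed
    ultimately show "N u = S * w u / sum w A" using S by (simp add: t_def W_def[symmetric] field_simps)
  qed
qed

theorem proposition3:
  fixes p \<kappa> Ntot :: nat and VY :: real and sigma :: "nat set \<Rightarrow> real"
  assumes "2 \<le> p" and "1 \<le> \<kappa>" and "0 < Ntot" and "0 < VY"
    and "\<forall>u\<in>proper_subsets p. 0 < sigma u"
  shows "feasible_alloc p \<kappa> Ntot (N_opt p \<kappa> Ntot sigma)
    \<and> (\<forall>N. feasible_alloc p \<kappa> Ntot N \<longrightarrow>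
          total_var_eta_hat p VY sigma (N_opt p \<kappa> Ntot sigma) \<le> total_var_eta_hat p VY sigma N)
    \<and> (\<forall>N. feasible_alloc p \<kappa> Ntot N \<longrightarrow>
          total_var_eta_hat p VY sigma N \<le> total_var_eta_hat p VY sigma (N_opt p \<kappa> Ntot sigma) \<longrightarrow>
          (\<forall>u\<in>proper_subsets p. N u = N_opt p \<kappa> Ntot sigma u))"
proof -
  note sig = assms(5)
  define A where "A = proper_subsets p"
  define w where "w = opt_weight p sigma"
  define S where "S = real Ntot / real \<kappa>"
  define W where "W = sum w A"
  define K where "K = (1 / (real p * VY))^2 * (real p / (fact (p - 1))^2)"
  have finA: "finite A" unfolding A_def proper_subsets_def
    by (rule finite_subset[of _ "Pow {1..p}"]) auto
  have "{1} \<in> A"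
  proof -
    have two: "(2::nat) \<in> {1..p}" using assms(1) by simp
    have "{1} \<noteq> {1..p}"
    proof
      assume "{1} = {1..p}"
      then have "(2::nat) \<in> {1}" using two by simp
      then show False by simp
    qed
    moreover have "1 \<in> {1..p}" using assms(1) by simp
    ultimately show ?thesis by (simp add: A_def proper_subsets_def)
  qed
  then have neA: "A \<noteq> {}" by auto
  have wpos: "\<forall>u\<in>A. 0 < w u"
    using sig by (auto simp: A_def w_def opt_weight_def)
  have Spos: "0 < S" using assms(2,3) by (simp add: S_def)
  have Wpos: "0 < W" unfolding W_def using wpos finA neA by (intro sum_pos) auto
  have Kpos: "0 < K" using assms(1,4) by (simp add: K_def)
  have Nopt: "N_opt p \<kappa> Ntot sigma = (\<lambda>u. S * w u / W)"
    by (rule ext) (simp add: N_opt_def S_def w_def W_def A_def)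
  have tot: "\<And>N. total_var_eta_hat p VY sigma N = K * (\<Sum>u\<in>A. (w u)^2 / N u)"
    using total[OF sig] by (simp add: K_def A_def w_def)
  have feas_iff: "\<And>N. feasible_alloc p \<kappa> Ntot N \<longleftrightarrow> (\<forall>u\<in>A. 0 < N u) \<and> sum N A = S"
    using assms(2) by (auto simp: feasible_alloc_def A_def S_def field_simps)
  have f1: "feasible_alloc p \<kappa> Ntot (N_opt p \<kappa> Ntot sigma)"
  proof -
    have "\<forall>u\<in>A. 0 < S * w u / W" using wpos Spos Wpos by auto
    moreover have "(\<Sum>u\<in>A. S * w u / W) = S"
      using Wpos by (simp add: sum_divide_distrib[symmetric] sum_distrib_left[symmetric] W_def)
    ultimately show ?thesis unfolding feas_iff Nopt by simp
  qed
  have vopt: "total_var_eta_hat p VY sigma (N_opt p \<kappa> Ntot sigma) = K * (W^2 / S)"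
  proof -
    have "(\<Sum>u\<in>A. (w u)^2 / (S * w u / W)) = (\<Sum>u\<in>A. w u * (W / S))"
      using wpos Spos Wpos by (intro sum.cong) (auto simp: power2_eq_square field_simps)
    also have "\<dots> = W^2 / S" by (simp only: sum_distrib_right[symmetric] W_def[symmetric]) (simp add: power2_eq_square)
    finally show ?thesis unfolding tot Nopt by simp
  qed
  show ?thesis
  proof (intro conjI allI impI)
    show "feasible_alloc p \<kappa> Ntot (N_opt p \<kappa> Ntot sigma)" by (fact f1)
  next
    fix N assume "feasible_alloc p \<kappa> Ntot N"
    then have N: "\<forall>u\<in>A. 0 < N u" "sum N A = S" unfolding feas_iff by auto
    have "W^2 / S \<le> (\<Sum>u\<in>A. (w u)^2 / N u)"
      using opt_ineq(1)[OF finA wpos Spos N] W_def by simp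
    then have "K * (W^2 / S) \<le> K * (\<Sum>u\<in>A. (w u)^2 / N u)" using Kpos by (intro mult_left_mono) auto
    then show "total_var_eta_hat p VY sigma (N_opt p \<kappa> Ntot sigma) \<le> total_var_eta_hat p VY sigma N"
      using vopt tot[of N] by simp
  next
    fix N assume "feasible_alloc p \<kappa> Ntot N"
    then have N: "\<forall>u\<in>A. 0 < N u" "sum N A = S" unfolding feas_iff by auto
    assume "total_var_eta_hat p VY sigma N \<le> total_var_eta_hat p VY sigma (N_opt p \<kappa> Ntot sigma)"
    then have "K * (\<Sum>u\<in>A. (w u)^2 / N u) \<le> K * (W^2 / S)"
      using vopt tot[of N] by simp
    then have "(\<Sum>u\<in>A. (w u)^2 / N u) \<le> W^2 / S"
      using Kpos mult_le_cancel_left_pos by blast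
    then have "\<forall>u\<in>A. N u = S * w u / W"
      using opt_ineq(2)[OF finA wpos Spos N] W_def by simp
    then show "\<forall>u\<in>proper_subsets p. N u = N_opt p \<kappa> Ntot sigma u"
      unfolding Nopt A_def by simp
  qed
qed

end
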